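(* Let $n$ be a positive integer and $p,q$ primes such that $\binom{n}{k}$ is divisible by $p$ or $q$ for every integer $1\le k\le n-1$. Then for every integer $m\le n$, the multinomial coefficient $\binom{n}{k_1,\dots,k_m}=\frac{n!}{k_1!\cdots k_m!}$ is divisible by $p$ or $q$ whenever $k_1+\cdots+k_m=n$ with $1\le k_i\le n-1$ for all $i$. *)

theory Defs
  imports "HOL-Computational_Algebra.Primes"
begin

text \<open>Multinomial coefficient n!/(k_1! ... k_m!) for a composition k_0,...,k_{m-1} of n
  (indices shifted to 0..m-1).\<close>
definition multinomial :: "nat \<Rightarrow> nat \<Rightarrow> (nat \<Rightarrow> nat) \<Rightarrow> nat" where
  "multinomial n m k = fact n div (\<Prod>i<m. fact (k i))"

end

theory Submission
  imports Defs
begin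

lemma fact_add_dvd: "fact a * fact b dvd (fact (a + b) :: nat)"
proof -
  have "fact a * fact (a + b - a) * ((a+b) choose a) = (fact (a+b) :: nat)"
    by (rule binomial_fact_lemma) simp
  then show ?thesis by (metis add_diff_cancel_left' dvd_triv_left)
qed

lemma prod_fact_dvd:
  assumes "finite A"
  shows "(\<Prod>i\<in>A. fact (k i)) dvd (fact (\<Sum>i\<in>A. k i) :: nat)"
  using assms
proof (induction A rule: finite_induct)
  case empty
  then show ?case by simp
next
  case (insert x A)
  have "fact (k x) * (\<Prod>i\<in>A. fact (k i)) dvd fact (k x) * (fact (\<Sum>i\<in>A. k i) :: nat)"
    using insert.IH by (rule mult_dvd_mono[OF dvd_refl])
  also have "\<dots> dvd fact (k x + (\<Sum>i\<in>A. k i))" by (rule fact_add_dvd)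
  finally show ?case using insert by simp
qed

theorem mainTheorem17:
  fixes n p q :: nat
  assumes "n > 0" and "prime p" and "prime q"
    and "\<forall>k. 1 \<le> k \<and> k \<le> n - 1 \<longrightarrow> p dvd (n choose k) \<or> q dvd (n choose k)"
  shows "\<forall>m (k :: nat \<Rightarrow> nat). m \<le> n \<and> (\<Sum>i<m. k i) = n \<and> (\<forall>i<m. 1 \<le> k i \<and> k i \<le> n - 1)
           \<longrightarrow> p dvd multinomial n m k \<or> q dvd multinomial n m k"
proof (intro allI impI)
  fix m and k :: "nat \<Rightarrow> nat"
  assume h: "m \<le> n \<and> (\<Sum>i<m. k i) = n \<and> (\<forall>i<m. 1 \<le> k i \<and> k i \<le> n - 1)"
  have m0: "m \<noteq> 0" proof assume "m = 0" then show False using h assms(1) by simp qed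
  then have m1: "m \<noteq> 1" using h assms(1) by (auto simp: lessThan_Suc)
  have sp: "{..<m} = insert 0 {1..<m}" using m0 by auto
  have sumsplit: "n = k 0 + (\<Sum>i\<in>{1..<m}. k i)" using h sp by simp
  have prodsplit: "(\<Prod>i<m. fact (k i)) = fact (k 0) * (\<Prod>i\<in>{1..<m}. fact (k i) :: nat)"
    using sp by simp
  have k0: "1 \<le> k 0" "k 0 \<le> n - 1" using h m0 by auto
  define C where "C = n choose k 0"
  have fn: "fact (k 0) * fact (n - k 0) * C = (fact n :: nat)"
    unfolding C_def by (rule binomial_fact_lemma) (use k0 assms(1) in simp)
  obtain r where r: "fact (n - k 0) = (\<Prod>i\<in>{1..<m}. fact (k i) :: nat) * r"
    using prod_fact_dvd[of "{1..<m}" k] sumsplit by (metis add_diff_cancel_left' dvdE finite_atLeastLessThan)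
  have "fact n = (\<Prod>i<m. fact (k i)) * (r * C :: nat)"
    using fn r prodsplit by (simp add: ac_simps)
  then have "multinomial n m k = r * C"
    unfolding multinomial_def by (simp add: fact_nonzero)
  then have "C dvd multinomial n m k" by simp
  moreover have "p dvd C \<or> q dvd C" using assms(4) k0 C_def by blast
  ultimately show "p dvd multinomial n m k \<or> q dvd multinomial n m k"
    using dvd_trans by blast
qed

end
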